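(* Let $\Bbbk$ be a field of characteristic zero and $\lambda,\mu\in\Bbbk^*$. Then $\mathcal O(\lambda)\cong\mathcal O(\mu)$ as Lie algebras if and only if $\sqrt{\lambda/\mu}\in\Bbbk$ (i.e. $\lambda/\mu$ is a square in $\Bbbk$).
   Context: $\mathcal W$ is the Witt algebra over $\Bbbk$ with basis $L_n$ ($n\in\mathbb{Z}$) and $[L_n,L_m]=(n-m)L_{n+m}$. For $\lambda\in\Bbbk^*$, $\mathcal O(\lambda)$ is the subalgebra of $\mathcal W$ spanned by $L_n-\lambda^nL_{-n}$, $n\ge1$. *)

theory Defs
  imports Main
begin

text \<open>The Witt algebra over a field 'k: elements are finitely supported
  coefficient functions int => 'k, x = sum_n x(n) L_n.\<close>

definition witt_carrier :: "(int \<Rightarrow> 'k::field) set" where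
  "witt_carrier = {x. finite {n. x n \<noteq> 0}}"

definition wL :: "int \<Rightarrow> int \<Rightarrow> 'k::field" where
  "wL n = (\<lambda>i. if i = n then 1 else 0)"

definition wadd :: "(int \<Rightarrow> 'k::field) \<Rightarrow> (int \<Rightarrow> 'k) \<Rightarrow> int \<Rightarrow> 'k" where
  "wadd x y = (\<lambda>i. x i + y i)"

definition wscale :: "'k::field \<Rightarrow> (int \<Rightarrow> 'k) \<Rightarrow> int \<Rightarrow> 'k" where
  "wscale a x = (\<lambda>i. a * x i)"

text \<open>Lie bracket extending [L_n, L_m] = (n - m) L_(n+m) bilinearly:
  the coefficient of L_p in [x,y] is the sum over n + m = p of (n - m) x(n) y(m).\<close>
definition wbracket :: "(int \<Rightarrow> 'k::field) \<Rightarrow> (int \<Rightarrow> 'k) \<Rightarrow> int \<Rightarrow> 'k" where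
  "wbracket x y = (\<lambda>p. \<Sum>n\<in>{n. x n \<noteq> 0}. of_int (n - (p - n)) * x n * y (p - n))"

definition Ogen :: "'k::field \<Rightarrow> nat \<Rightarrow> int \<Rightarrow> 'k" where
  "Ogen lam n = (\<lambda>i. wL (int n) i - lam ^ n * wL (- int n) i)"

definition Osub :: "'k::field \<Rightarrow> (int \<Rightarrow> 'k) set" where
  "Osub lam = {x. \<exists>S c. finite S \<and> S \<subseteq> {1..} \<and>
       x = (\<lambda>i. \<Sum>n\<in>S. c n * Ogen lam n i)}"

definition lie_iso_sub :: "(int \<Rightarrow> 'k::field) set \<Rightarrow> (int \<Rightarrow> 'k) set \<Rightarrow> bool" where
  "lie_iso_sub A B = (\<exists>\<phi>. bij_betw \<phi> A B \<and>
      (\<forall>x\<in>A. \<forall>y\<in>A. \<forall>a b. \<phi> (wadd (wscale a x) (wscale b y)) = wadd (wscale a (\<phi> x)) (wscale b (\<phi> y))) \<and>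
      (\<forall>x\<in>A. \<forall>y\<in>A. \<phi> (wbracket x y) = wbracket (\<phi> x) (\<phi> y)))"

end

theory Submission
  imports Defs "HOL-Library.Product_Plus"
begin


lemma witt_carrier_iff: "x \<in> witt_carrier \<longleftrightarrow> finite {n. x n \<noteq> 0}"
  by (simp add: witt_carrier_def)

lemma wbracket_eq:
  assumes "finite F" "{n. x n \<noteq> 0} \<subseteq> F"
  shows "wbracket x y p = (\<Sum>n\<in>F. of_int (n - (p - n)) * x n * y (p - n))"
  unfolding wbracket_def
  by (rule sum.mono_neutral_left) (use assms in auto)

lemma sum_fun_carrier:
  assumes "finite J" "\<And>j. j \<in> J \<Longrightarrow> g j \<in> witt_carrier"
  shows "(\<lambda>i. \<Sum>j\<in>J. g j i) \<in> witt_carrier"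
proof -
  have "{i. (\<Sum>j\<in>J. g j i) \<noteq> 0} \<subseteq> (\<Union>j\<in>J. {i. g j i \<noteq> 0})"
    by (auto intro: ccontr simp: sum.neutral)
  moreover have "finite (\<Union>j\<in>J. {i. g j i \<noteq> 0})"
    using assms by (auto simp: witt_carrier_def)
  ultimately show ?thesis by (auto simp: witt_carrier_def intro: finite_subset)
qed

lemma wbr_sum_left:
  assumes "finite J" "\<And>j. j \<in> J \<Longrightarrow> g j \<in> witt_carrier"
  shows "wbracket (\<lambda>i. \<Sum>j\<in>J. g j i) y p = (\<Sum>j\<in>J. wbracket (g j) y p)"
proof -
  define F where "F = (\<Union>j\<in>J. {i. g j i \<noteq> 0})"
  have fF: "finite F" using assms by (auto simp: witt_carrier_def F_def)
  have s1: "{i. (\<Sum>j\<in>J. g j i) \<noteq> 0} \<subseteq> F"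
    by (auto intro: ccontr simp: sum.neutral F_def)
  have "wbracket (\<lambda>i. \<Sum>j\<in>J. g j i) y p = (\<Sum>n\<in>F. of_int (n - (p - n)) * (\<Sum>j\<in>J. g j n) * y (p - n))"
    by (rule wbracket_eq[OF fF s1])
  also have "\<dots> = (\<Sum>n\<in>F. \<Sum>j\<in>J. of_int (n - (p - n)) * g j n * y (p - n))"
    by (simp add: sum_distrib_left sum_distrib_right mult.assoc)
  also have "\<dots> = (\<Sum>j\<in>J. \<Sum>n\<in>F. of_int (n - (p - n)) * g j n * y (p - n))"
    by (rule sum.swap)
  also have "\<dots> = (\<Sum>j\<in>J. wbracket (g j) y p)"
    by (rule sum.cong[OF refl], rule wbracket_eq[symmetric]) (use fF in \<open>auto simp: F_def\<close>)
  finally show ?thesis .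
qed

lemma wbr_sum_right:
  shows "wbracket x (\<lambda>i. \<Sum>j\<in>J. g j i) p = (\<Sum>j\<in>J. wbracket x (g j) p)"
  unfolding wbracket_def
  by (simp add: sum_distrib_left sum.swap[of _ J])

lemma wbr_scale_left:
  "wbracket (\<lambda>i. c * x i) y p = c * wbracket x y p"
proof (cases "c = 0")
  case True then show ?thesis by (simp add: wbracket_def)
next
  case False
  then have "{n. c * x n \<noteq> 0} = {n. x n \<noteq> 0}" by auto
  then show ?thesis unfolding wbracket_def by (simp add: sum_distrib_left mult.assoc mult.left_commute)
qed

lemma wbr_scale_right:
  "wbracket x (\<lambda>i. c * y i) p = c * wbracket x y p"
  unfolding wbracket_def by (simp add: sum_distrib_left mult.assoc mult.left_commute)



lemma Ogen_val: "n \<ge> 1 \<Longrightarrow> Ogen l n i = (if i = int n then 1 else if i = - int n then - (l ^ n) else 0)"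
  by (auto simp: Ogen_def wL_def)

lemma Ogen_supp: "n \<ge> 1 \<Longrightarrow> {i. Ogen l n i \<noteq> 0} \<subseteq> {int n, - int n}"
  by (auto simp: Ogen_val split: if_splits)

lemma Ogen_carrier: "n \<ge> 1 \<Longrightarrow> Ogen l n \<in> witt_carrier"
  unfolding witt_carrier_def using Ogen_supp by (auto intro: finite_subset)

lemma wbr_Ogen_left:
  assumes "n \<ge> 1"
  shows "wbracket (Ogen l n) y p = of_int (2 * int n - p) * y (p - int n) + of_int (2 * int n + p) * l^n * y (p + int n)"
proof -
  have "wbracket (Ogen l n) y p = (\<Sum>i\<in>{int n, - int n}. of_int (i - (p - i)) * Ogen l n i * y (p - i))"
    by (rule wbracket_eq) (use Ogen_supp[OF assms] in auto)
  also have "\<dots> = of_int (2 * int n - p) * y (p - int n) + of_int (2 * int n + p) * l^n * y (p + int n)"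
    using assms by (simp add: Ogen_val algebra_simps)
  finally show ?thesis .
qed

lemma int_solve: "p + int n = q \<Longrightarrow> p = q - int n" by simp

lemma wbr_Ogen_gt:
  assumes "1 \<le> m" "m < n"
  shows "wbracket (Ogen l n) (Ogen l m) = (\<lambda>p. of_nat (n - m) * Ogen l (n + m) p - of_nat (n + m) * l^m * Ogen l (n - m) p)"
proof
  fix p
  have pw: "l ^ n = l ^ m * l ^ (n - m)" using assms by (simp add: power_add[symmetric])
  have pw2: "l ^ (n + m) = l ^ n * l ^ m" by (simp add: power_add)
  show "wbracket (Ogen l n) (Ogen l m) p = of_nat (n - m) * Ogen l (n + m) p - of_nat (n + m) * l^m * Ogen l (n - m) p"
    using assms unfolding wbr_Ogen_left[OF order.trans[OF assms(1) less_imp_le[OF assms(2)]]]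
    by (auto simp: Ogen_val of_nat_diff pw power_add algebra_simps dest!: int_solve)
qed



lemma int_solve2: "p + int n * 2 = 0 \<Longrightarrow> p = - (2 * int n)" by simp

lemma wbr_Ogen_eq:
  assumes "1 \<le> n"
  shows "wbracket (Ogen l n) (Ogen l n) = (\<lambda>p. 0)"
proof
  fix p
  show "wbracket (Ogen l n) (Ogen l n) p = 0"
    using assms unfolding wbr_Ogen_left[OF assms]
    by (auto simp: Ogen_val algebra_simps dest!: int_solve int_solve2)
qed

lemma wbr_Ogen_lt:
  assumes "1 \<le> n" "n < m"
  shows "wbracket (Ogen l n) (Ogen l m) = (\<lambda>p. of_nat (n + m) * l^n * Ogen l (m - n) p - of_nat (m - n) * Ogen l (n + m) p)"
proof
  fix p
  have pw: "l ^ m = l ^ n * l ^ (m - n)" using assms by (simp add: power_add[symmetric])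
  show "wbracket (Ogen l n) (Ogen l m) p = of_nat (n + m) * l^n * Ogen l (m - n) p - of_nat (m - n) * Ogen l (n + m) p"
    using assms unfolding wbr_Ogen_left[OF assms(1)]
    by (auto simp: Ogen_val of_nat_diff pw power_add algebra_simps dest!: int_solve)
qed

lemma Osub_carrier: "x \<in> Osub l \<Longrightarrow> x \<in> witt_carrier"
proof -
  assume "x \<in> Osub l"
  then obtain S c where S: "finite S" "S \<subseteq> {1..}" "x = (\<lambda>i. \<Sum>n\<in>S. c n * Ogen l n i)"
    unfolding Osub_def by blast
  have "\<And>n. n \<in> S \<Longrightarrow> (\<lambda>i. c n * Ogen l n i) \<in> witt_carrier"
  proof -
    fix n assume "n \<in> S"
    then have "1 \<le> n" using S by auto
    have "{i. c n * Ogen l n i \<noteq> 0} \<subseteq> {int n, - int n}" using Ogen_supp[OF \<open>1 \<le> n\<close>, of l] by auto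
    then show "(\<lambda>i. c n * Ogen l n i) \<in> witt_carrier"
      unfolding witt_carrier_def by (auto intro: finite_subset)
  qed
  then show ?thesis using S(1,3) sum_fun_carrier[of S "\<lambda>n i. c n * Ogen l n i"] by simp
qed

lemma Ogen_in: "1 \<le> n \<Longrightarrow> Ogen l n \<in> Osub l"
  unfolding Osub_def by (rule CollectI, rule exI[of _ "{n}"], rule exI[of _ "\<lambda>_. 1"]) auto

lemma sum_extend:
  fixes c g :: "nat \<Rightarrow> 'a::semiring_0"
  assumes "finite U" "S \<subseteq> U"
  shows "(\<Sum>n\<in>S. c n * g n) = (\<Sum>n\<in>U. (if n \<in> S then c n else 0) * g n)"
proof -
  have "(\<Sum>n\<in>U. (if n \<in> S then c n else 0) * g n) = (\<Sum>n\<in>U. if n \<in> S then c n * g n else 0)"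
    by (rule sum.cong) auto
  also have "\<dots> = (\<Sum>n\<in>U \<inter> S. c n * g n)" using assms(1) by (simp add: sum.inter_restrict)
  also have "U \<inter> S = S" using assms by auto
  finally show ?thesis by simp
qed

lemma Osub_lin:
  assumes "x \<in> Osub l" "y \<in> Osub l"
  shows "(\<lambda>i. a * x i + b * y i) \<in> Osub l"
proof -
  obtain S c where S: "finite S" "S \<subseteq> {1..}" "x = (\<lambda>i. \<Sum>n\<in>S. c n * Ogen l n i)"
    using assms(1) unfolding Osub_def by blast
  obtain T d where T: "finite T" "T \<subseteq> {1..}" "y = (\<lambda>i. \<Sum>n\<in>T. d n * Ogen l n i)"
    using assms(2) unfolding Osub_def by blast
  define e where "e n = a * (if n \<in> S then c n else 0) + b * (if n \<in> T then d n else 0)" for n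
  have "(\<lambda>i. a * x i + b * y i) = (\<lambda>i. \<Sum>n\<in>S \<union> T. e n * Ogen l n i)"
  proof
    fix i
    have "x i = (\<Sum>n\<in>S \<union> T. (if n \<in> S then c n else 0) * Ogen l n i)"
      using S T sum_extend[of "S \<union> T" S c "\<lambda>n. Ogen l n i"] by simp
    moreover have "y i = (\<Sum>n\<in>S \<union> T. (if n \<in> T then d n else 0) * Ogen l n i)"
      using S T sum_extend[of "S \<union> T" T d "\<lambda>n. Ogen l n i"] by simp
    ultimately show "a * x i + b * y i = (\<Sum>n\<in>S \<union> T. e n * Ogen l n i)"
      by (simp add: e_def sum_distrib_left sum.distrib algebra_simps)
  qed
  then show ?thesis unfolding Osub_def using S T by blast
qed

lemma Osub_zero: "(\<lambda>i. 0) \<in> Osub l"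
  unfolding Osub_def by (rule CollectI, rule exI[of _ "{}"]) auto

lemma Osub_scale: "x \<in> Osub l \<Longrightarrow> (\<lambda>i. c * x i) \<in> Osub l"
  using Osub_lin[of x l x c 0] by simp

lemma Osub_add: "x \<in> Osub l \<Longrightarrow> y \<in> Osub l \<Longrightarrow> (\<lambda>i. x i + y i) \<in> Osub l"
  using Osub_lin[of x l y 1 1] by simp

lemma Osub_sum:
  assumes "finite J" "\<And>j. j \<in> J \<Longrightarrow> g j \<in> Osub l"
  shows "(\<lambda>i. \<Sum>j\<in>J. g j i) \<in> Osub l"
  using assms
proof (induction J rule: finite_induct)
  case empty then show ?case by (simp add: Osub_zero)
next
  case (insert j J)
  then show ?case by (simp add: Osub_add)
qed

lemma Osub_diff: "x \<in> Osub l \<Longrightarrow> y \<in> Osub l \<Longrightarrow> (\<lambda>i. a * x i - b * y i) \<in> Osub l"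
  using Osub_lin[of x l y a "- b"] by simp

lemma wbr_Ogen_in:
  assumes "1 \<le> n" "1 \<le> m"
  shows "wbracket (Ogen l n) (Ogen l m) \<in> Osub l"
proof -
  consider "m < n" | "n = m" | "n < m" by linarith
  then show ?thesis
  proof cases
    case 1 then show ?thesis using assms by (simp add: wbr_Ogen_gt Osub_diff Ogen_in)
  next
    case 2 then show ?thesis using assms by (simp add: wbr_Ogen_eq Osub_zero)
  next
    case 3 then show ?thesis using assms by (simp add: wbr_Ogen_lt Osub_diff Ogen_in)
  qed
qed

lemma wbr_expand:
  assumes "finite S" "S \<subseteq> {1..}" "x = (\<lambda>i. \<Sum>n\<in>S. c n * Ogen l n i)"
    and "finite T" "T \<subseteq> {1..}" "y = (\<lambda>i. \<Sum>n\<in>T. d n * Ogen l n i)"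
  shows "wbracket x y = (\<lambda>p. \<Sum>n\<in>S. \<Sum>m\<in>T. c n * d m * wbracket (Ogen l n) (Ogen l m) p)"
proof
  fix p
  have car: "\<And>n. n \<in> S \<Longrightarrow> (\<lambda>i. c n * Ogen l n i) \<in> witt_carrier"
    using assms(2) by (auto intro!: Osub_carrier Osub_scale Ogen_in)
  have "wbracket x y p = (\<Sum>n\<in>S. wbracket (\<lambda>i. c n * Ogen l n i) y p)"
    unfolding assms(3) by (rule wbr_sum_left[OF assms(1) car])
  also have "\<dots> = (\<Sum>n\<in>S. c n * wbracket (Ogen l n) y p)"
    by (simp add: wbr_scale_left)
  also have "\<dots> = (\<Sum>n\<in>S. \<Sum>m\<in>T. c n * d m * wbracket (Ogen l n) (Ogen l m) p)"
    unfolding assms(6) wbr_sum_right wbr_scale_right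
    by (simp add: sum_distrib_left mult.assoc)
  finally show "wbracket x y p = (\<Sum>n\<in>S. \<Sum>m\<in>T. c n * d m * wbracket (Ogen l n) (Ogen l m) p)" .
qed

lemma Osub_bracket:
  assumes "x \<in> Osub l" "y \<in> Osub l"
  shows "wbracket x y \<in> Osub l"
proof -
  obtain S c where S: "finite S" "S \<subseteq> {1..}" "x = (\<lambda>i. \<Sum>n\<in>S. c n * Ogen l n i)"
    using assms(1) unfolding Osub_def by blast
  obtain T d where T: "finite T" "T \<subseteq> {1..}" "y = (\<lambda>i. \<Sum>n\<in>T. d n * Ogen l n i)"
    using assms(2) unfolding Osub_def by blast
  show ?thesis
    unfolding wbr_expand[OF S T]
    using S(1,2) T(1,2)
    by (intro Osub_sum) (auto simp: mult.assoc intro!: Osub_scale wbr_Ogen_in)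
qed



definition emul :: "'k::field \<Rightarrow> 'k \<times> 'k \<Rightarrow> 'k \<times> 'k \<Rightarrow> 'k \<times> 'k" where
  "emul l x y = (fst x * fst y + l * snd x * snd y, fst x * snd y + snd x * fst y)"

definition escl :: "'k::field \<Rightarrow> 'k \<times> 'k \<Rightarrow> 'k \<times> 'k" where
  "escl c x = (c * fst x, c * snd x)"

primrec spw :: "'k::field \<Rightarrow> nat \<Rightarrow> 'k \<times> 'k" where
  "spw l 0 = (1, 0)"
| "spw l (Suc n) = emul l (0, 1) (spw l n)"

definition vv :: "'k::field \<Rightarrow> nat \<Rightarrow> ('k \<times> 'k) \<times> ('k \<times> 'k)" where
  "vv l n = (escl (of_nat n) (spw l n), escl (of_nat n * (of_nat n ^ 2 - 1)) (spw l (n - 2)))"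

definition lscl :: "'k::field \<Rightarrow> ('k \<times> 'k) \<times> ('k \<times> 'k) \<Rightarrow> ('k \<times> 'k) \<times> ('k \<times> 'k)" where
  "lscl c u = (escl c (fst u), escl c (snd u))"

definition lbr :: "'k::field \<Rightarrow> ('k \<times> 'k) \<times> ('k \<times> 'k) \<Rightarrow> ('k \<times> 'k) \<times> ('k \<times> 'k) \<Rightarrow> ('k \<times> 'k) \<times> ('k \<times> 'k)" where
  "lbr l u w = ((0, 0), escl 4 (emul l (fst w) (snd u) - emul l (fst u) (snd w)))"

definition psi :: "'k::field \<Rightarrow> (int \<Rightarrow> 'k) \<Rightarrow> ('k \<times> 'k) \<times> ('k \<times> 'k)" where
  "psi l x = (\<Sum>n\<in>{n. x (int n) \<noteq> 0}. lscl (x (int n)) (vv l n))"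

lemma emul_comm: "emul l x y = emul l y x"
  by (simp add: emul_def algebra_simps)
lemma emul_assoc: "emul l (emul l x y) z = emul l x (emul l y z)"
  by (simp add: emul_def algebra_simps)
lemma emul_add_left: "emul l (x + y) z = emul l x z + emul l y z"
  by (simp add: emul_def algebra_simps)
lemma emul_add_right: "emul l z (x + y) = emul l z x + emul l z y"
  by (simp add: emul_def algebra_simps)
lemma emul_diff_left: "emul l (x - y) z = emul l x z - emul l y z"
  by (simp add: emul_def algebra_simps)
lemma emul_diff_right: "emul l z (x - y) = emul l z x - emul l z y"
  by (simp add: emul_def algebra_simps)
lemma emul_escl_left: "emul l (escl c x) y = escl c (emul l x y)"
  by (simp add: emul_def escl_def algebra_simps)
lemma emul_escl_right: "emul l x (escl c y) = escl c (emul l x y)"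
  by (simp add: emul_def escl_def algebra_simps)
lemma emul_zero_left[simp]: "emul l 0 y = 0"
  by (simp add: emul_def zero_prod_def)
lemma emul_zero_right[simp]: "emul l y 0 = 0"
  by (simp add: emul_def zero_prod_def)
lemma emul_one[simp]: "emul l (1, 0) y = y"
  by (simp add: emul_def)
lemma escl_escl: "escl a (escl b x) = escl (a * b) x"
  by (simp add: escl_def)
lemma escl_add: "escl c (x + y) = escl c x + escl c y"
  by (simp add: escl_def algebra_simps)
lemma escl_diff: "escl c (x - y) = escl c x - escl c y"
  by (simp add: escl_def algebra_simps)
lemma escl_add2: "escl (a + b) x = escl a x + escl b x"
  by (simp add: escl_def algebra_simps)
lemma escl_zero[simp]: "escl 0 x = 0" "escl c 0 = 0"
  by (simp_all add: escl_def zero_prod_def)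
lemma escl_one[simp]: "escl 1 x = x"
  by (simp add: escl_def)
lemma escl_sum: "escl c (\<Sum>j\<in>J. f j) = (\<Sum>j\<in>J. escl c (f j))"
  by (induction J rule: infinite_finite_induct) (auto simp: escl_add)
lemma emul_sum_left: "emul l (\<Sum>j\<in>J. f j) y = (\<Sum>j\<in>J. emul l (f j) y)"
  by (induction J rule: infinite_finite_induct) (auto simp: emul_add_left)
lemma emul_sum_right: "emul l y (\<Sum>j\<in>J. f j) = (\<Sum>j\<in>J. emul l y (f j))"
  by (induction J rule: infinite_finite_induct) (auto simp: emul_add_right)

lemma lscl_zero[simp]: "lscl 0 u = 0" "lscl c 0 = 0"
  by (simp_all add: lscl_def escl_def zero_prod_def)
lemma lscl_add: "lscl c (u + w) = lscl c u + lscl c w"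
  by (simp add: lscl_def escl_add)
lemma lscl_add2: "lscl (a + b) u = lscl a u + lscl b u"
  by (simp add: lscl_def escl_add2)
lemma lscl_lscl: "lscl a (lscl b u) = lscl (a * b) u"
  by (simp add: lscl_def escl_escl)
lemma lscl_sum: "lscl c (\<Sum>j\<in>J. f j) = (\<Sum>j\<in>J. lscl c (f j))"
  by (induction J rule: infinite_finite_induct) (auto simp: lscl_add)
lemma lscl_sum2: "lscl (\<Sum>j\<in>J. f j) u = (\<Sum>j\<in>J. lscl (f j) u)"
  by (induction J rule: infinite_finite_induct) (auto simp: lscl_add2)

lemma lbr_add_left: "lbr l (u + u') w = lbr l u w + lbr l u' w"
  by (simp add: lbr_def emul_add_left emul_add_right escl_add escl_diff algebra_simps)
lemma lbr_add_right: "lbr l w (u + u') = lbr l w u + lbr l w u'"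
  by (simp add: lbr_def emul_add_left emul_add_right escl_add escl_diff algebra_simps)
lemma lbr_zero_left[simp]: "lbr l 0 w = 0"
  by (simp add: lbr_def escl_def emul_def zero_prod_def)
lemma lbr_zero_right[simp]: "lbr l w 0 = 0"
  by (simp add: lbr_def escl_def emul_def zero_prod_def)
lemma lbr_scl_left: "lbr l (lscl c u) w = lscl c (lbr l u w)"
  by (simp add: lbr_def lscl_def emul_escl_left emul_escl_right escl_def emul_def algebra_simps)
lemma lbr_scl_right: "lbr l w (lscl c u) = lscl c (lbr l w u)"
  by (simp add: lbr_def lscl_def emul_escl_left emul_escl_right escl_def emul_def algebra_simps)
lemma lbr_sum_left: "lbr l (\<Sum>j\<in>J. f j) w = (\<Sum>j\<in>J. lbr l (f j) w)"
  by (induction J rule: infinite_finite_induct) (auto simp: lbr_add_left)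
lemma lbr_sum_right: "lbr l w (\<Sum>j\<in>J. f j) = (\<Sum>j\<in>J. lbr l w (f j))"
  by (induction J rule: infinite_finite_induct) (auto simp: lbr_add_right)
lemma lbr_antisym: "lbr l u w = - lbr l w u"
  by (simp add: lbr_def escl_def emul_comm algebra_simps)
lemma lbr_self: "lbr l u u = 0"
  by (simp add: lbr_def escl_def zero_prod_def)

lemma spw_add: "emul l (spw l a) (spw l b) = spw l (a + b)"
  by (induction a) (simp_all add: emul_assoc)

lemma spw_2m: "spw l (2 * k) = (l ^ k, 0)"
  by (induction k) (simp_all add: emul_def)

lemma escl_pow_spw: "escl (l ^ k) (spw l a) = spw l (a + 2 * k)"
proof -
  have "escl (l ^ k) (spw l a) = emul l (spw l (2 * k)) (spw l a)"
    by (simp add: spw_2m emul_def escl_def)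
  then show ?thesis by (simp add: spw_add add.commute)
qed

lemma vv_zero[simp]: "vv l 0 = 0"
  by (simp add: vv_def zero_prod_def)



lemma h2:
  assumes "1 \<le> m"
  shows "escl (of_nat m * (of_nat m ^ 2 - 1)) (emul l (spw l n) (spw l (m - 2)))
       = escl (of_nat m * (of_nat m ^ 2 - 1)) (spw (l::'k::field) (n + m - 2))"
proof (cases "m = 1")
  case True then show ?thesis by simp
next
  case False
  then have "n + (m - 2) = n + m - 2" using assms by simp
  then show ?thesis by (simp add: spw_add)
qed

lemma h3:
  assumes "1 \<le> k"
  shows "escl (of_nat k * (of_nat k ^ 2 - 1)) (escl (l ^ m) (spw l (k - 2)))
       = escl (of_nat k * (of_nat k ^ 2 - 1)) (spw (l::'k::field) (k + 2 * m - 2))"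
proof (cases "k = 1")
  case True then show ?thesis by simp
next
  case False
  then have "k - 2 + 2 * m = k + 2 * m - 2" using assms by simp
  then show ?thesis by (simp add: escl_pow_spw)
qed

lemma escl_sub2: "escl a x - escl b x = escl (a - b) x"
  by (simp add: escl_def algebra_simps)

lemma VV:
  fixes l :: "'k::field"
  assumes "1 \<le> m" "m < n"
  shows "lbr l (vv l n) (vv l m) = lscl (of_nat (n - m)) (vv l (n + m)) - lscl (of_nat (n + m) * l ^ m) (vv l (n - m))"
proof -
  have nm: "of_nat (n - m) = (of_nat n - of_nat m :: 'k)" using assms by (simp add: of_nat_diff)
  have A: "escl (of_nat (n + m) * l ^ m) (escl (of_nat (n - m)) (spw l (n - m)))
        = escl (of_nat (n + m) * of_nat (n - m)) (spw l (n + m))"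
  proof -
    have "escl (of_nat (n + m) * l ^ m) (escl (of_nat (n - m)) (spw l (n - m)))
       = escl (of_nat (n + m) * of_nat (n - m)) (escl (l ^ m) (spw l (n - m)))"
      by (simp add: escl_escl mult_ac)
    also have "escl (l ^ m) (spw l (n - m)) = spw l (n + m)"
      using assms by (simp add: escl_pow_spw add.commute)
    finally show ?thesis .
  qed
  have fst_eq: "fst (lbr l (vv l n) (vv l m)) = fst (lscl (of_nat (n - m)) (vv l (n + m)) - lscl (of_nat (n + m) * l ^ m) (vv l (n - m)))"
    unfolding lbr_def lscl_def vv_def fst_diff fst_conv A
    by (simp add: escl_escl mult_ac zero_prod_def)
  define N where "N = (of_nat n :: 'k)"
  define M where "M = (of_nat m :: 'k)"
  define X where "X = spw l (n + m - 2)"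
  have B1: "emul l (escl M (spw l m)) (escl (N * (N ^ 2 - 1)) (spw l (n - 2))) = escl (M * (N * (N^2 - 1))) X"
  proof -
    have "m + (n - 2) = n + m - 2" using assms by simp
    then show ?thesis by (simp add: emul_escl_left emul_escl_right escl_escl spw_add X_def mult_ac)
  qed
  have B2: "emul l (escl N (spw l n)) (escl (M * (M ^ 2 - 1)) (spw l (m - 2))) = escl (N * (M * (M^2 - 1))) X"
  proof -
    have "escl N (escl (M * (M^2 - 1)) (emul l (spw l n) (spw l (m - 2)))) = escl N (escl (M * (M^2 - 1)) X)"
      using h2[OF assms(1), where n=n and l=l] by (simp add: M_def X_def)
    then show ?thesis by (simp add: emul_escl_left emul_escl_right escl_escl mult.commute)
  qed
  have B3: "escl (of_nat (n + m) * l ^ m) (escl (of_nat (n - m) * (of_nat (n - m) ^ 2 - 1)) (spw l (n - m - 2)))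
     = escl ((N + M) * ((N - M) * ((N - M)^2 - 1))) X"
  proof -
    have "escl (of_nat (n + m) * l ^ m) (escl (of_nat (n - m) * (of_nat (n - m) ^ 2 - 1)) (spw l (n - m - 2)))
       = escl (of_nat (n + m)) (escl (of_nat (n - m) * (of_nat (n - m) ^ 2 - 1)) (escl (l ^ m) (spw l (n - m - 2))))"
      by (simp add: escl_escl mult_ac)
    also have "\<dots> = escl (of_nat (n + m)) (escl (of_nat (n - m) * (of_nat (n - m) ^ 2 - 1)) (spw l (n - m + 2 * m - 2)))"
      using h3[of "n - m" l m] assms by simp
    also have "n - m + 2 * m - 2 = n + m - 2" using assms by simp
    finally show ?thesis by (simp add: escl_escl X_def N_def M_def nm mult_ac)
  qed
  have snd_eq: "snd (lbr l (vv l n) (vv l m)) = snd (lscl (of_nat (n - m)) (vv l (n + m)) - lscl (of_nat (n + m) * l ^ m) (vv l (n - m)))"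
  proof -
    have "snd (lbr l (vv l n) (vv l m)) = escl 4 (escl (M * (N * (N^2 - 1))) X - escl (N * (M * (M^2 - 1))) X)"
      unfolding lbr_def vv_def using B1 B2 by (simp add: M_def N_def)
    also have "\<dots> = escl (4 * (M * (N * (N^2 - 1)) - N * (M * (M^2 - 1)))) X"
      by (simp add: escl_sub2 escl_escl)
    also have "\<dots> = escl ((N - M) * ((N + M) * ((N + M)^2 - 1)) - (N + M) * ((N - M) * ((N - M)^2 - 1))) X"
      by (rule arg_cong[where f = "\<lambda>c. escl c X"]) (simp add: algebra_simps power2_eq_square)
    also have "\<dots> = escl ((N - M) * ((N + M) * ((N + M)^2 - 1))) X - escl ((N + M) * ((N - M) * ((N - M)^2 - 1))) X"
      by (simp add: escl_sub2)
    also have "\<dots> = snd (lscl (of_nat (n - m)) (vv l (n + m)) - lscl (of_nat (n + m) * l ^ m) (vv l (n - m)))"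
      unfolding lscl_def vv_def using B3
      by (simp add: escl_escl nm N_def M_def X_def mult_ac)
    finally show ?thesis .
  qed
  show ?thesis using fst_eq snd_eq by (simp add: prod_eq_iff)
qed



lemma finite_supp_nat: "x \<in> witt_carrier \<Longrightarrow> finite {n::nat. x (int n) \<noteq> 0}"
proof -
  assume "x \<in> witt_carrier"
  then have "finite (int -` {i. x i \<noteq> 0})"
    by (intro finite_vimageI) (auto simp: witt_carrier_def inj_on_def)
  then show ?thesis by (simp add: vimage_def)
qed

lemma psi_eq:
  assumes "finite F" "{n. x (int n) \<noteq> 0} \<subseteq> F"
  shows "psi l x = (\<Sum>n\<in>F. lscl (x (int n)) (vv l n))"
  unfolding psi_def by (rule sum.mono_neutral_left) (use assms in auto)

lemma lscl_diff2: "lscl (a - b) u = lscl a u - lscl b u"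
  by (simp add: lscl_def escl_def algebra_simps)

lemma psi_sum:
  assumes "finite J" "\<And>j. j \<in> J \<Longrightarrow> g j \<in> witt_carrier"
  shows "psi l (\<lambda>i. \<Sum>j\<in>J. g j i) = (\<Sum>j\<in>J. psi l (g j))"
proof -
  define F where "F = (\<Union>j\<in>J. {n. g j (int n) \<noteq> 0})"
  have fF: "finite F" using assms finite_supp_nat by (auto simp: F_def)
  have "psi l (\<lambda>i. \<Sum>j\<in>J. g j i) = (\<Sum>n\<in>F. lscl (\<Sum>j\<in>J. g j (int n)) (vv l n))"
    by (rule psi_eq[OF fF]) (auto intro: ccontr simp: sum.neutral F_def)
  also have "\<dots> = (\<Sum>n\<in>F. \<Sum>j\<in>J. lscl (g j (int n)) (vv l n))"
    by (simp add: lscl_sum2)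
  also have "\<dots> = (\<Sum>j\<in>J. \<Sum>n\<in>F. lscl (g j (int n)) (vv l n))"
    by (rule sum.swap)
  also have "\<dots> = (\<Sum>j\<in>J. psi l (g j))"
    by (rule sum.cong[OF refl], rule psi_eq[symmetric]) (use fF in \<open>auto simp: F_def\<close>)
  finally show ?thesis .
qed

lemma psi_scale:
  assumes "x \<in> witt_carrier"
  shows "psi l (\<lambda>i. c * x i) = lscl c (psi l x)"
proof -
  have fF: "finite {n. x (int n) \<noteq> 0}" using finite_supp_nat[OF assms] .
  have "psi l (\<lambda>i. c * x i) = (\<Sum>n\<in>{n. x (int n) \<noteq> 0}. lscl (c * x (int n)) (vv l n))"
    by (rule psi_eq[OF fF]) auto
  also have "\<dots> = lscl c (psi l x)"
    unfolding psi_def by (simp add: lscl_sum lscl_lscl)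
  finally show ?thesis .
qed

lemma psi_add:
  assumes "x \<in> witt_carrier" "y \<in> witt_carrier"
  shows "psi l (\<lambda>i. x i + y i) = psi l x + psi l y"
proof -
  have "psi l (\<lambda>i. \<Sum>j\<in>{True, False}. (if j then x else y) i) = (\<Sum>j\<in>{True, False}. psi l (if j then x else y))"
    by (rule psi_sum) (use assms in auto)
  then show ?thesis by simp
qed

lemma carrier_lin: "x \<in> witt_carrier \<Longrightarrow> y \<in> witt_carrier \<Longrightarrow> (\<lambda>i. a * x i + b * y i) \<in> witt_carrier"
proof -
  assume "x \<in> witt_carrier" "y \<in> witt_carrier"
  then have "finite ({i. x i \<noteq> 0} \<union> {i. y i \<noteq> 0})" by (auto simp: witt_carrier_def)
  moreover have "{i. a * x i + b * y i \<noteq> 0} \<subseteq> {i. x i \<noteq> 0} \<union> {i. y i \<noteq> 0}" by auto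
  ultimately show ?thesis unfolding witt_carrier_def by (auto intro: finite_subset)
qed

lemma carrier_scale: "x \<in> witt_carrier \<Longrightarrow> (\<lambda>i. a * x i) \<in> witt_carrier"
  using carrier_lin[of x x a 0] by simp

lemma psi_diff:
  assumes "x \<in> witt_carrier" "y \<in> witt_carrier"
  shows "psi l (\<lambda>i. a * x i - b * y i) = lscl a (psi l x) - lscl b (psi l y)"
proof -
  have "psi l (\<lambda>i. a * x i - b * y i) = psi l (\<lambda>i. a * x i) + psi l (\<lambda>i. (- b) * y i)"
    using psi_add[OF carrier_scale[OF assms(1)] carrier_scale[OF assms(2)], of l a "- b"] by simp
  also have "\<dots> = lscl a (psi l x) + lscl (- b) (psi l y)"
    using psi_scale[OF assms(1), of l a] psi_scale[OF assms(2), of l "- b"] by simp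
  also have "\<dots> = lscl a (psi l x) - lscl b (psi l y)"
    using lscl_diff2[of 0 b "psi l y"] by simp
  finally show ?thesis .
qed

lemma psi_Ogen:
  assumes "1 \<le> n"
  shows "psi l (Ogen l n) = vv l n"
proof -
  have "psi l (Ogen l n) = (\<Sum>k\<in>{n}. lscl (Ogen l n (int k)) (vv l k))"
    by (rule psi_eq) (use assms in \<open>auto simp: Ogen_val split: if_splits\<close>)
  also have "\<dots> = vv l n" using assms by (simp add: Ogen_val lscl_def escl_def)
  finally show ?thesis .
qed

lemma psi_br_Ogen:
  assumes "1 \<le> n" "1 \<le> m"
  shows "psi l (wbracket (Ogen l n) (Ogen l m)) = lbr l (vv l n) (vv l m)"
proof -
  consider "m < n" | "n = m" | "n < m" by linarith
  then show ?thesis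
  proof cases
    case 1
    have "psi l (wbracket (Ogen l n) (Ogen l m)) = lscl (of_nat (n - m)) (psi l (Ogen l (n + m))) - lscl (of_nat (n + m) * l ^ m) (psi l (Ogen l (n - m)))"
      unfolding wbr_Ogen_gt[OF assms(2) 1]
      by (rule psi_diff) (use 1 assms in \<open>auto intro: Ogen_carrier\<close>)
    also have "\<dots> = lbr l (vv l n) (vv l m)"
      using 1 assms by (simp add: psi_Ogen VV)
    finally show ?thesis .
  next
    case 2
    have "psi l (\<lambda>p. 0) = 0" by (simp add: psi_def)
    then show ?thesis using 2 assms by (simp add: wbr_Ogen_eq lbr_self)
  next
    case 3
    have "psi l (wbracket (Ogen l n) (Ogen l m)) = lscl (of_nat (n + m) * l ^ n) (psi l (Ogen l (m - n))) - lscl (of_nat (m - n)) (psi l (Ogen l (n + m)))"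
      unfolding wbr_Ogen_lt[OF assms(1) 3]
      by (rule psi_diff) (use 3 assms in \<open>auto intro: Ogen_carrier\<close>)
    also have "\<dots> = - lbr l (vv l m) (vv l n)"
      using 3 assms by (simp add: psi_Ogen VV add.commute)
    also have "\<dots> = lbr l (vv l n) (vv l m)" by (simp add: lbr_antisym[of l "vv l n"])
    finally show ?thesis .
  qed
qed

lemma psi_expand:
  assumes "finite S" "S \<subseteq> {1..}"
  shows "psi l (\<lambda>i. \<Sum>n\<in>S. c n * Ogen l n i) = (\<Sum>n\<in>S. lscl (c n) (vv l n))"
proof -
  have "psi l (\<lambda>i. \<Sum>n\<in>S. c n * Ogen l n i) = (\<Sum>n\<in>S. psi l (\<lambda>i. c n * Ogen l n i))"
    by (rule psi_sum[OF assms(1)]) (use assms(2) in \<open>auto intro!: carrier_scale Ogen_carrier\<close>)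
  also have "\<dots> = (\<Sum>n\<in>S. lscl (c n) (vv l n))"
    by (rule sum.cong[OF refl]) (use assms(2) in \<open>auto simp: psi_scale Ogen_carrier psi_Ogen\<close>)
  finally show ?thesis .
qed

lemma psi_hom:
  assumes "x \<in> Osub l" "y \<in> Osub l"
  shows "psi l (wbracket x y) = lbr l (psi l x) (psi l y)"
proof -
  obtain S c where S: "finite S" "S \<subseteq> {1..}" "x = (\<lambda>i. \<Sum>n\<in>S. c n * Ogen l n i)"
    using assms(1) unfolding Osub_def by blast
  obtain T d where T: "finite T" "T \<subseteq> {1..}" "y = (\<lambda>i. \<Sum>n\<in>T. d n * Ogen l n i)"
    using assms(2) unfolding Osub_def by blast
  have car: "\<And>n m. n \<in> S \<Longrightarrow> m \<in> T \<Longrightarrow> wbracket (Ogen l n) (Ogen l m) \<in> witt_carrier"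
    using S(2) T(2) by (auto intro!: Osub_carrier[of _ l] wbr_Ogen_in)
  have "psi l (wbracket x y) = psi l (\<lambda>p. \<Sum>n\<in>S. (\<lambda>p. \<Sum>m\<in>T. c n * d m * wbracket (Ogen l n) (Ogen l m) p) p)"
    unfolding wbr_expand[OF S T] by simp
  also have "\<dots> = (\<Sum>n\<in>S. psi l (\<lambda>p. \<Sum>m\<in>T. c n * d m * wbracket (Ogen l n) (Ogen l m) p))"
    by (rule psi_sum[OF S(1)]) (use car T(1) in \<open>auto intro!: sum_fun_carrier carrier_scale\<close>)
  also have "\<dots> = (\<Sum>n\<in>S. \<Sum>m\<in>T. lscl (c n * d m) (lbr l (vv l n) (vv l m)))"
  proof (rule sum.cong[OF refl])
    fix n assume n: "n \<in> S"
    have "psi l (\<lambda>p. \<Sum>m\<in>T. c n * d m * wbracket (Ogen l n) (Ogen l m) p) = (\<Sum>m\<in>T. psi l (\<lambda>p. c n * d m * wbracket (Ogen l n) (Ogen l m) p))"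
      by (rule psi_sum[OF T(1)]) (use car n in \<open>auto intro!: carrier_scale\<close>)
    also have "\<dots> = (\<Sum>m\<in>T. lscl (c n * d m) (lbr l (vv l n) (vv l m)))"
    proof (rule sum.cong[OF refl])
      fix m assume m: "m \<in> T"
      have "1 \<le> n" "1 \<le> m" using n m S(2) T(2) by auto
      then show "psi l (\<lambda>p. c n * d m * wbracket (Ogen l n) (Ogen l m) p) = lscl (c n * d m) (lbr l (vv l n) (vv l m))"
        using car[OF n m] by (simp add: psi_scale psi_br_Ogen)
    qed
    finally show "psi l (\<lambda>p. \<Sum>m\<in>T. c n * d m * wbracket (Ogen l n) (Ogen l m) p) = (\<Sum>m\<in>T. lscl (c n * d m) (lbr l (vv l n) (vv l m)))" .
  qed
  also have "\<dots> = (\<Sum>m\<in>T. \<Sum>n\<in>S. lscl (c n * d m) (lbr l (vv l n) (vv l m)))"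
    by (rule sum.swap)
  also have "\<dots> = lbr l (\<Sum>n\<in>S. lscl (c n) (vv l n)) (\<Sum>m\<in>T. lscl (d m) (vv l m))"
    by (simp add: lbr_sum_left lbr_sum_right lbr_scl_left lbr_scl_right lscl_lscl lscl_sum mult.commute)
  also have "\<dots> = lbr l (psi l x) (psi l y)"
    using S T by (simp add: psi_expand)
  finally show ?thesis .
qed



lemma escl_cancel: "k \<noteq> 0 \<Longrightarrow> escl k x = escl k y \<Longrightarrow> x = y"
  by (auto simp: escl_def prod_eq_iff)

lemma solve_a:
  fixes k :: "'k::field"
  assumes "k \<noteq> 0" "escl k X = escl K Y" "Y = escl t Z"
  shows "X = escl (K * t / k) Z"
  using assms by (auto simp: escl_def prod_eq_iff field_simps)

lemma solve_c:
  fixes k :: "'k::field"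
  assumes "k \<noteq> 0" "escl 4 (emul l D h3) = escl k X - escl K Y" "Y = escl t Z + emul l D h2"
  shows "X = escl (K * t / k) Z + emul l D (escl (1 / k) (escl 4 h3 + escl K h2))"
proof -
  have "escl k X = escl 4 (emul l D h3) + escl K Y" using assms(2) by (simp add: algebra_simps)
  then have "X = escl (1/k) (escl 4 (emul l D h3) + escl K Y)"
    using assms(1) by (auto simp: escl_def prod_eq_iff field_simps)
  then show ?thesis
    by (simp add: assms(3) escl_def emul_def prod_eq_iff algebra_simps add_divide_distrib)
qed

lemma memb:
  fixes l :: "'k::field"
  assumes "am = escl s Ap" "cm = escl s Cp + emul l D hm" "an = escl t Aq" "cn = escl t Cq + emul l D hn"
    and "emul l Ap Cq - emul l Aq Cp = escl \<sigma> D"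
  shows "emul l am cn - emul l an cm = emul l D (escl (s * t * \<sigma>) (1, 0) + escl s (emul l Ap hn) - escl t (emul l Aq hm))"
proof -
  have "emul l am cn - emul l an cm = escl (s * t) (emul l Ap Cq - emul l Aq Cp) + emul l D (escl s (emul l Ap hn) - escl t (emul l Aq hm))"
    using assms(1-4) by (simp add: emul_def escl_def prod_eq_iff algebra_simps)
  also have "\<dots> = emul l D (escl (s * t * \<sigma>) (1, 0) + escl s (emul l Ap hn) - escl t (emul l Aq hm))"
    using assms(5) by (simp add: emul_def escl_def prod_eq_iff algebra_simps)
  finally show ?thesis .
qed

definition inD :: "'k::field \<Rightarrow> 'k \<times> 'k \<Rightarrow> 'k \<times> 'k \<Rightarrow> bool" where
  "inD l D x \<longleftrightarrow> (\<exists>h. x = emul l D h)"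

lemma inD_zero: "inD l D 0"
  unfolding inD_def by (rule exI[of _ 0]) simp

lemma inD_add: "inD l D x \<Longrightarrow> inD l D y \<Longrightarrow> inD l D (x + y)"
  unfolding inD_def by (metis emul_add_right)

lemma inD_escl: "inD l D x \<Longrightarrow> inD l D (escl c x)"
  unfolding inD_def by (metis emul_escl_right)

lemma inD_sum: "(\<And>j. j \<in> J \<Longrightarrow> inD l D (f j)) \<Longrightarrow> inD l D (\<Sum>j\<in>J. f j)"
  by (induction J rule: infinite_finite_induct) (auto intro: inD_zero inD_add)



lemma chain:
  fixes l mu :: "'k::field_char_0"
  assumes Dunit: "emul l D Di = (1, 0)"
    and Ddef: "D = emul l a2 c1 - emul l a1 c2"
    and a3: "a3 = escl (3 * mu) a1" and a4: "a4 = escl (2 * mu) a2"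
    and a5: "a5 = escl (5 * mu^2) a1" and a6: "a6 = escl (3 * mu^2) a2"
    and H2: "escl 4 (emul l a1 c2 - emul l a2 c1) = escl 1 c3 - escl (3 * mu) c1"
    and H3: "escl 4 (emul l a1 c3 - emul l a3 c1) = escl 2 c4 - escl (4 * mu) c2"
    and H4: "escl 4 (emul l a1 c4 - emul l a4 c1) = escl 3 c5 - escl (5 * mu) c3"
    and H5: "escl 4 (emul l a1 c5 - emul l a5 c1) = escl 4 c6 - escl (6 * mu) c4"
    and H6: "escl 4 (emul l a1 c6 - emul l a6 c1) = escl 5 c7 - escl (7 * mu) c5"
    and H32: "escl 4 (emul l a2 c3 - emul l a3 c2) = escl 1 c5 - escl (5 * mu^2) c1"
    and H43: "escl 4 (emul l a3 c4 - emul l a4 c3) = escl 1 c7 - escl (7 * mu^3) c1"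
  shows "escl 3 a2 = (4 * mu, 0) + escl 2 (emul l a1 a1)"
    and "emul l (emul l a1 a1) (emul l a1 a1) - escl (5 * mu) (emul l a1 a1) + (4 * mu^2, 0) = 0"
proof -
  have cancelD: "X = 0" if "emul l D X = 0" for X
  proof -
    have "X = emul l (emul l D Di) X" by (simp add: Dunit)
    also have "\<dots> = emul l Di (emul l D X)" by (simp add: emul_def algebra_simps)
    also have "\<dots> = 0" using that by simp
    finally show ?thesis .
  qed
  have c3: "c3 = escl (3 * mu) c1 - escl 4 D"
  proof -
    have "c3 = escl 4 (emul l a1 c2 - emul l a2 c1) + escl (3 * mu) c1"
      using H2 by (simp add: eq_diff_eq)
    then show ?thesis by (simp add: Ddef prod_eq_iff escl_def emul_def algebra_simps)
  qed
  have c4: "c4 = escl (2 * mu) c2 - escl 8 (emul l a1 D)"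
  proof -
    have "escl 2 c4 = escl 4 (emul l a1 c3 - emul l a3 c1) + escl (4 * mu) c2"
      using H3 by (simp add: eq_diff_eq)
    also have "\<dots> = escl 2 (escl (2 * mu) c2 - escl 8 (emul l a1 D))"
      by (simp add: c3 a3 Ddef prod_eq_iff escl_def emul_def algebra_simps)
    finally show ?thesis by (rule escl_cancel[rotated]) simp
  qed
  define g5 where "g5 = ((28/3) * mu, 0) + escl (32/3) (emul l a1 a1)"
  have c5: "c5 = escl (5 * mu^2) c1 - emul l D g5"
  proof -
    have "escl 3 c5 = escl 4 (emul l a1 c4 - emul l a4 c1) + escl (5 * mu) c3"
      using H4 by (simp add: eq_diff_eq)
    also have "\<dots> = escl 3 (escl (5 * mu^2) c1 - emul l D g5)"
      by (simp add: c3 c4 a4 g5_def Ddef prod_eq_iff escl_def emul_def field_simps power2_eq_square)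
    finally show ?thesis by (rule escl_cancel[rotated]) simp
  qed
  show P1: "escl 3 a2 = (4 * mu, 0) + escl 2 (emul l a1 a1)"
  proof -
    have "emul l D (escl (16/3) (escl 3 a2 - (4 * mu, 0) - escl 2 (emul l a1 a1))) = (escl 1 c5 - escl (5 * mu^2) c1) - escl 4 (emul l a2 c3 - emul l a3 c2)"
      by (simp add: c3 c5 a3 g5_def Ddef prod_eq_iff escl_def emul_def field_simps power2_eq_square)
    also have "\<dots> = 0" using H32 by simp
    finally have "escl (16/3) (escl 3 a2 - (4 * mu, 0) - escl 2 (emul l a1 a1)) = 0" by (rule cancelD)
    then have "escl 3 a2 - (4 * mu, 0) - escl 2 (emul l a1 a1) = 0"
      using escl_cancel[of "16/3" "escl 3 a2 - (4 * mu, 0) - escl 2 (emul l a1 a1)" 0] by simp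
    then show ?thesis by (simp add: prod_eq_iff algebra_simps)
  qed
  define g6 where "g6 = escl ((64/3) * mu) a1 + escl (32/3) (emul l a1 (emul l a1 a1))"
  have c6: "c6 = escl (3 * mu^2) c2 - emul l D g6"
  proof -
    have "escl 4 c6 = escl 4 (emul l a1 c5 - emul l a5 c1) + escl (6 * mu) c4"
      using H5 by (simp add: eq_diff_eq)
    also have "\<dots> = escl 4 (escl (3 * mu^2) c2 - emul l D g6)"
      by (simp add: c4 c5 a5 g5_def g6_def Ddef prod_eq_iff escl_def emul_def field_simps power2_eq_square)
    finally show ?thesis by (rule escl_cancel[rotated]) simp
  qed
  define u where "u = emul l a1 a1"
  define g7 where "g7 = ((232/15) * mu^2, 0) + escl (32 * mu) u + escl (128/15) (emul l u u)"
  have c7: "c7 = escl (7 * mu^3) c1 - emul l D g7"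
  proof -
    have "escl 5 c7 = escl 4 (emul l a1 c6 - emul l a6 c1) + escl (7 * mu) c5"
      using H6 by (simp add: eq_diff_eq)
    also have "\<dots> = escl 5 (escl (7 * mu^3) c1 - emul l D g7)"
      by (simp add: c5 c6 a6 g5_def g6_def g7_def u_def Ddef prod_eq_iff escl_def emul_def field_simps power2_eq_square power3_eq_cube)
    finally show ?thesis by (rule escl_cancel[rotated]) simp
  qed
  define Z where "Z = g7 - (24 * mu^2, 0) - escl (96 * mu) u + escl (32 * mu) a2"
  have "emul l D Z = escl 4 (emul l a3 c4 - emul l a4 c3) - (escl 1 c7 - escl (7 * mu^3) c1)"
    by (simp add: c3 c4 c7 a3 a4 Z_def g7_def u_def Ddef prod_eq_iff escl_def emul_def field_simps power2_eq_square power3_eq_cube)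
  also have "\<dots> = 0" using H43 by simp
  finally have Z0: "Z = 0" by (rule cancelD)
  have P0: "escl 3 a2 - (4 * mu, 0) - escl 2 u = 0" using P1 by (simp add: u_def)
  have "emul l u u - escl (5 * mu) u + (4 * mu^2, 0) = escl (15/128) (Z - escl (32 * mu / 3) (escl 3 a2 - (4 * mu, 0) - escl 2 u))"
    by (simp add: Z_def g7_def prod_eq_iff escl_def emul_def field_simps power2_eq_square)
  also have "\<dots> = 0" using Z0 P0 by simp
  finally show "emul l (emul l a1 a1) (emul l a1 a1) - escl (5 * mu) (emul l a1 a1) + (4 * mu^2, 0) = 0"
    by (simp add: u_def)
qed



lemma final_extract:
  fixes l mu :: "'k::field_char_0"
  assumes l0: "l \<noteq> 0" and m0: "mu \<noteq> 0"
    and P1: "escl 3 a2 = (4 * mu, 0) + escl 2 (emul l a1 a1)"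
    and Q: "emul l (emul l a1 a1) (emul l a1 a1) - escl (5 * mu) (emul l a1 a1) + (4 * mu^2, 0) = 0"
    and det: "fst a1 * snd a2 - fst a2 * snd a1 \<noteq> 0"
  shows "\<exists>r. r^2 = l / mu"
proof -
  define x where "x = fst a1"
  define y where "y = snd a1"
  define x2 where "x2 = fst a2"
  define y2 where "y2 = snd a2"
  define U where "U = x^2 + l * y^2"
  define V where "V = 2 * x * y"
  have e1: "3 * x2 = 4 * mu + 2 * U" using P1
    by (simp add: escl_def emul_def prod_eq_iff x_def y_def x2_def U_def power2_eq_square)
  have e2: "3 * y2 = 4 * x * y" using P1
    by (simp add: escl_def emul_def prod_eq_iff x_def y_def y2_def algebra_simps)
  have q1: "U^2 + l * V^2 - 5 * mu * U + 4 * mu^2 = 0" using Q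
    by (simp add: escl_def emul_def prod_eq_iff x_def y_def U_def V_def power2_eq_square algebra_simps)
  have q2: "V * (2 * U - 5 * mu) = 0" using Q
    by (simp add: escl_def emul_def prod_eq_iff x_def y_def U_def V_def power2_eq_square algebra_simps)
  have d: "x * y2 - x2 * y \<noteq> 0" using det by (simp add: x_def y_def x2_def y2_def)
  have y0: "y \<noteq> 0"
  proof
    assume "y = 0"
    then have "y2 = 0" using e2 by simp
    then show False using d \<open>y = 0\<close> by simp
  qed
  show ?thesis
  proof (cases "x = 0")
    case True
    then have "U = l * y^2" "V = 0" by (simp_all add: U_def V_def)
    then have "(l * y^2 - mu) * (l * y^2 - 4 * mu) = 0" using q1 by (simp add: algebra_simps power2_eq_square)
    then have "l * y^2 = mu \<or> l * y^2 = 4 * mu" by simp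
    then show ?thesis
    proof
      assume h: "l * y^2 = mu"
      have "(1 / y)^2 = 1 / y^2" by (simp add: power_divide)
      also have "\<dots> = l / mu" using y0 m0 h by (simp add: frac_eq_eq mult.commute)
      finally have "(1 / y)^2 = l / mu" .
      then show ?thesis by blast
    next
      assume h: "l * y^2 = 4 * mu"
      have "(2 / y)^2 = 4 / y^2" by (simp add: power_divide)
      also have "\<dots> = l / mu" using y0 m0 h by (simp add: frac_eq_eq mult.commute)
      finally have "(2 / y)^2 = l / mu" .
      then show ?thesis by blast
    qed
  next
    case False
    then have V0: "V \<noteq> 0" using y0 by (simp add: V_def)
    then have U: "2 * U = 5 * mu" using q2 by simp
    then have lV: "4 * (l * V^2) = 9 * mu^2" using q1
      by algebra
    define ell where "ell = 3 * mu / (2 * V)"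
    have ell2: "ell^2 = l" using lV V0 by (simp add: ell_def field_simps power2_eq_square)
    have sq: "(x + ell * y)^2 = 4 * mu"
    proof -
      have "(x + ell * y)^2 = U + 2 * ell * x * y" using ell2 by (simp add: U_def power2_eq_square algebra_simps)
      also have "2 * ell * x * y = 3 * mu / 2" using V0 by (simp add: ell_def V_def field_simps)
      finally show ?thesis using U by (simp add: field_simps)
    qed
    then have nz: "x + ell * y \<noteq> 0" using m0 by auto
    have "(2 * ell / (x + ell * y))^2 = l / mu"
      using nz m0 by (simp add: power_divide sq ell2 power_mult_distrib)
    then show ?thesis by blast
  qed
qed



lemma vv1: "vv l 1 = ((0, 1), (0, 0))"
  by (simp add: vv_def emul_def escl_def)

lemma vv1': "vv l (Suc 0) = ((0, 1), (0, 0))"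
  using vv1 by simp

lemma vv2: "vv l 2 = ((2 * l, 0), (6, 0))"
  by (simp add: vv_def emul_def escl_def numeral_2_eq_2)

lemma core:
  fixes l mu :: "'k::field_char_0" and w :: "nat \<Rightarrow> ('k \<times> 'k) \<times> ('k \<times> 'k)"
  assumes l0: "l \<noteq> 0" and m0: "mu \<noteq> 0"
    and HW: "\<And>n m. 1 \<le> m \<Longrightarrow> m < n \<Longrightarrow> lbr l (w n) (w m) = lscl (of_nat (n - m)) (w (n + m)) - lscl (of_nat (n + m) * mu ^ m) (w (n - m))"
    and T1: "finite T1" "T1 \<subseteq> {1..}" "vv l 1 = (\<Sum>m\<in>T1. lscl (d1 m) (w m))"
    and T2: "finite T2" "T2 \<subseteq> {1..}" "vv l 2 = (\<Sum>m\<in>T2. lscl (d2 m) (w m))"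
  shows "\<exists>r. r^2 = l / mu"
proof -
  define a where "a n = fst (w n)" for n
  define c where "c n = snd (w n)" for n
  have HA: "escl (of_nat (n - m)) (a (n + m)) = escl (of_nat (n + m) * mu ^ m) (a (n - m))"
    if "1 \<le> m" "m < n" for n m
  proof -
    have "fst (lbr l (w n) (w m)) = fst (lscl (of_nat (n - m)) (w (n + m)) - lscl (of_nat (n + m) * mu ^ m) (w (n - m)))"
      using HW[OF that] by simp
    then have "0 = escl (of_nat (n - m)) (a (n + m)) - escl (of_nat (n + m) * mu ^ m) (a (n - m))"
      by (simp add: lbr_def lscl_def a_def zero_prod_def)
    then show ?thesis by simp
  qed
  have HC: "escl 4 (emul l (a m) (c n) - emul l (a n) (c m)) = escl (of_nat (n - m)) (c (n + m)) - escl (of_nat (n + m) * mu ^ m) (c (n - m))"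
    if "1 \<le> m" "m < n" for n m
  proof -
    have "snd (lbr l (w n) (w m)) = snd (lscl (of_nat (n - m)) (w (n + m)) - lscl (of_nat (n + m) * mu ^ m) (w (n - m)))"
      using HW[OF that] by simp
    then show ?thesis by (simp add: lbr_def lscl_def a_def c_def)
  qed
  define D where "D = emul l (a 2) (c 1) - emul l (a 1) (c 2)"
  define pi :: "nat \<Rightarrow> nat" where "pi n = (if odd n then 1 else 2)" for n
  have sig: "\<exists>\<sigma>. emul l (a p) (c q) - emul l (a q) (c p) = escl \<sigma> D" if pq: "p \<in> {1, 2}" "q \<in> {1, 2}" for p q
  proof -
    consider "p = q" | "p = 1" "q = 2" | "p = 2" "q = 1" using pq by fastforce
    then show ?thesis
    proof cases
      case 1 then show ?thesis by (intro exI[of _ 0]) simp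
    next
      case 2 then show ?thesis by (intro exI[of _ "-1"]) (simp add: D_def escl_def prod_eq_iff)
    next
      case 3 then show ?thesis by (intro exI[of _ 1]) (simp add: D_def)
    qed
  qed
  have pi12: "pi n \<in> {1, 2}" for n by (simp add: pi_def)
  have T: "\<exists>t h. a n = escl t (a (pi n)) \<and> c n = escl t (c (pi n)) + emul l D h" if "1 \<le> n" for n
    using that
  proof (induction n rule: less_induct)
    case (less n)
    show ?case
    proof (cases "n \<le> 2")
      case True
      then have "n = 1 \<or> n = 2" using less.prems by auto
      then have "pi n = n" by (auto simp: pi_def)
      then show ?thesis by (intro exI[of _ 1] exI[of _ 0]) simp
    next
      case False
      then have n3: "3 \<le> n" by simp
      have ex1: "\<exists>t h. a (n - 1) = escl t (a (pi (n - 1))) \<and> c (n - 1) = escl t (c (pi (n - 1))) + emul l D h"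
        by (rule less.IH) (use n3 in auto)
      obtain t1 h1 where IH1: "a (n - 1) = escl t1 (a (pi (n - 1)))" "c (n - 1) = escl t1 (c (pi (n - 1))) + emul l D h1"
        using ex1 by blast
      have ex2: "\<exists>t h. a (n - 2) = escl t (a (pi (n - 2))) \<and> c (n - 2) = escl t (c (pi (n - 2))) + emul l D h"
        by (rule less.IH) (use n3 in auto)
      obtain t2 h2 where IH2: "a (n - 2) = escl t2 (a (pi n))" "c (n - 2) = escl t2 (c (pi n)) + emul l D h2"
      proof -
        have "pi (n - 2) = pi n" using n3 by (auto simp: pi_def)
        then show ?thesis using ex2 that by metis
      qed
      have ha: "escl (of_nat (n - 2)) (a n) = escl (of_nat n * mu) (a (n - 2))"
        using HA[of 1 "n - 1"] n3 by (simp add: numeral_2_eq_2)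
      have hc: "escl 4 (emul l (a 1) (c (n - 1)) - emul l (a (n - 1)) (c 1)) = escl (of_nat (n - 2)) (c n) - escl (of_nat n * mu) (c (n - 2))"
        using HC[of 1 "n - 1"] n3 by (simp add: numeral_2_eq_2)
      have k0: "(of_nat (n - 2) :: 'k) \<noteq> 0"
      proof
        assume "(of_nat (n - 2) :: 'k) = 0"
        then have "n - 2 = 0" by (simp only: of_nat_eq_0_iff)
        then show False using n3 by simp
      qed
      obtain \<sigma> where s: "emul l (a 1) (c (pi (n - 1))) - emul l (a (pi (n - 1))) (c 1) = escl \<sigma> D"
        using sig[of 1 "pi (n - 1)"] pi12 by auto
      have M: "emul l (a 1) (c (n - 1)) - emul l (a (n - 1)) (c 1) = emul l D (escl (1 * t1 * \<sigma>) (1, 0) + escl 1 (emul l (a 1) h1) - escl t1 (emul l (a (pi (n - 1))) 0))"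
        by (rule memb[OF _ _ IH1 s]) simp_all
      have an: "a n = escl (of_nat n * mu * t2 / of_nat (n - 2)) (a (pi n))"
        by (rule solve_a[OF k0 ha IH2(1)])
      have cn: "c n = escl (of_nat n * mu * t2 / of_nat (n - 2)) (c (pi n)) + emul l D (escl (1 / of_nat (n - 2)) (escl 4 (escl (1 * t1 * \<sigma>) (1, 0) + escl 1 (emul l (a 1) h1) - escl t1 (emul l (a (pi (n - 1))) 0)) + escl (of_nat n * mu) h2))"
        by (rule solve_c[OF k0 _ IH2(2)]) (use hc M in simp)
      show ?thesis using an cn by blast
    qed
  qed
  have M2: "inD l D (emul l (a m) (c n) - emul l (a n) (c m))" if nm: "1 \<le> n" "1 \<le> m" for n m
  proof -
    obtain s hm where Tm: "a m = escl s (a (pi m))" "c m = escl s (c (pi m)) + emul l D hm" using T[OF nm(2)] by blast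
    obtain t hn where Tn: "a n = escl t (a (pi n))" "c n = escl t (c (pi n)) + emul l D hn" using T[OF nm(1)] by blast
    obtain \<sigma> where s: "emul l (a (pi m)) (c (pi n)) - emul l (a (pi n)) (c (pi m)) = escl \<sigma> D"
      using sig pi12 by blast
    show ?thesis unfolding inD_def using memb[OF Tm Tn s] by blast
  qed
  have Dunit: "\<exists>Di. emul l D Di = (1, 0)"
  proof -
    have "lbr l (vv l 1) (vv l 2) = (\<Sum>n\<in>T2. \<Sum>m\<in>T1. lscl (d2 n) (lscl (d1 m) (lbr l (w m) (w n))))"
      unfolding T1(3) T2(3) by (simp add: lbr_sum_left lbr_sum_right lbr_scl_left lbr_scl_right lscl_sum)
    then have "snd (lbr l (vv l 1) (vv l 2)) = (\<Sum>n\<in>T2. \<Sum>m\<in>T1. escl (d2 n) (escl (d1 m) (escl 4 (emul l (a n) (c m) - emul l (a m) (c n)))))"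
      by (simp add: snd_sum lscl_def lbr_def a_def c_def)
    moreover have "inD l D (\<Sum>n\<in>T2. \<Sum>m\<in>T1. escl (d2 n) (escl (d1 m) (escl 4 (emul l (a n) (c m) - emul l (a m) (c n)))))"
      using T1(2) T2(2) by (intro inD_sum inD_escl M2) auto
    moreover have "snd (lbr l (vv l 1) (vv l 2)) = (0, -24)"
      by (simp add: vv1 vv1' vv2 lbr_def emul_def escl_def)
    ultimately obtain H where H: "(0, -24) = emul l D H" unfolding inD_def by auto
    define Di where "Di = escl (-1 / (24 * l)) (emul l (0, 1) H)"
    have "emul l D Di = escl (-1 / (24 * l)) (emul l (0, 1) (emul l D H))"
      by (simp add: Di_def emul_def escl_def prod_eq_iff algebra_simps)
    also have "\<dots> = escl (-1 / (24 * l)) (emul l (0, 1) (0, -24))" by (simp only: H[symmetric])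
    also have "\<dots> = (1, 0)" using l0 by (simp add: emul_def escl_def)
    finally show ?thesis by blast
  qed
  then obtain Di where Di: "emul l D Di = (1, 0)" by blast
  have a3: "a 3 = escl (3 * mu) (a 1)"
    using HA[of 1 2] by (simp add: numeral_3_eq_3)
  have a4: "a 4 = escl (2 * mu) (a 2)"
  proof -
    have "escl 2 (a 4) = escl (4 * mu) (a 2)" using HA[of 1 3] by simp
    from solve_a[OF _ this, of 1 "a 2"] show ?thesis by simp
  qed
  have a5: "a 5 = escl (5 * mu^2) (a 1)"
  proof -
    have "escl 3 (a 5) = escl (5 * mu) (a 3)" using HA[of 1 4] by simp
    from solve_a[OF _ this a3] show ?thesis by (simp add: power2_eq_square mult_ac)
  qed
  have a6: "a 6 = escl (3 * mu^2) (a 2)"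
  proof -
    have "escl 4 (a 6) = escl (6 * mu) (a 4)" using HA[of 1 5] by simp
    from solve_a[OF _ this a4] show ?thesis by (simp add: power2_eq_square mult_ac)
  qed
  have H2: "escl 4 (emul l (a 1) (c 2) - emul l (a 2) (c 1)) = escl 1 (c 3) - escl (3 * mu) (c 1)"
    using HC[of 1 2] by simp
  have H3: "escl 4 (emul l (a 1) (c 3) - emul l (a 3) (c 1)) = escl 2 (c 4) - escl (4 * mu) (c 2)"
    using HC[of 1 3] by simp
  have H4: "escl 4 (emul l (a 1) (c 4) - emul l (a 4) (c 1)) = escl 3 (c 5) - escl (5 * mu) (c 3)"
    using HC[of 1 4] by simp
  have H5: "escl 4 (emul l (a 1) (c 5) - emul l (a 5) (c 1)) = escl 4 (c 6) - escl (6 * mu) (c 4)"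
    using HC[of 1 5] by simp
  have H6: "escl 4 (emul l (a 1) (c 6) - emul l (a 6) (c 1)) = escl 5 (c 7) - escl (7 * mu) (c 5)"
    using HC[of 1 6] by simp
  have H32: "escl 4 (emul l (a 2) (c 3) - emul l (a 3) (c 2)) = escl 1 (c 5) - escl (5 * mu^2) (c 1)"
    using HC[of 2 3] by simp
  have H43: "escl 4 (emul l (a 3) (c 4) - emul l (a 4) (c 3)) = escl 1 (c 7) - escl (7 * mu^3) (c 1)"
    using HC[of 3 4] by simp
  note ch = chain[OF Di D_def a3 a4 a5 a6 H2 H3 H4 H5 H6 H32 H43]
  have span: "\<exists>\<alpha> \<beta>. (\<Sum>m\<in>T. escl (d m) (a m)) = escl \<alpha> (a 1) + escl \<beta> (a 2)"
    if "finite T" "T \<subseteq> {1..}" for T d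
    using that
  proof (induction T rule: finite_induct)
    case empty
    show ?case by (intro exI[of _ 0]) simp
  next
    case (insert m T)
    then obtain \<alpha> \<beta> where ab: "(\<Sum>m\<in>T. escl (d m) (a m)) = escl \<alpha> (a 1) + escl \<beta> (a 2)" by auto
    obtain t h where tm: "a m = escl t (a (pi m))" using T[of m] insert.prems by auto
    show ?case
    proof (cases "odd m")
      case True
      then have "(\<Sum>m\<in>insert m T. escl (d m) (a m)) = escl (\<alpha> + d m * t) (a 1) + escl \<beta> (a 2)"
        using insert.hyps ab tm by (simp add: pi_def escl_def prod_eq_iff algebra_simps)
      then show ?thesis by blast
    next
      case False
      then have "(\<Sum>m\<in>insert m T. escl (d m) (a m)) = escl \<alpha> (a 1) + escl (\<beta> + d m * t) (a 2)"
        using insert.hyps ab tm by (simp add: pi_def escl_def prod_eq_iff algebra_simps)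
      then show ?thesis by blast
    qed
  qed
  have f1: "(0, 1) = (\<Sum>m\<in>T1. escl (d1 m) (a m))"
    using arg_cong[OF T1(3), of fst] by (simp add: vv1 vv1' fst_sum lscl_def a_def)
  have f2: "(2 * l, 0) = (\<Sum>m\<in>T2. escl (d2 m) (a m))"
    using arg_cong[OF T2(3), of fst] by (simp add: vv2 fst_sum lscl_def a_def)
  obtain \<alpha> \<beta> where ab1: "(0, 1) = escl \<alpha> (a 1) + escl \<beta> (a 2)" using span[OF T1(1,2), of d1] f1 by auto
  obtain \<alpha>' \<beta>' where ab2: "(2 * l, 0) = escl \<alpha>' (a 1) + escl \<beta>' (a 2)" using span[OF T2(1,2), of d2] f2 by auto
  have det: "fst (a 1) * snd (a 2) - fst (a 2) * snd (a 1) \<noteq> 0"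
  proof
    assume d0: "fst (a 1) * snd (a 2) - fst (a 2) * snd (a 1) = 0"
    have e: "(\<alpha> * fst (a 1) + \<beta> * fst (a 2)) * (\<alpha>' * snd (a 1) + \<beta>' * snd (a 2)) - (\<alpha>' * fst (a 1) + \<beta>' * fst (a 2)) * (\<alpha> * snd (a 1) + \<beta> * snd (a 2))
      = (\<alpha> * \<beta>' - \<alpha>' * \<beta>) * (fst (a 1) * snd (a 2) - fst (a 2) * snd (a 1))"
      by algebra
    have "0 * 0 - 2 * l * 1 = (\<alpha> * \<beta>' - \<alpha>' * \<beta>) * (fst (a 1) * snd (a 2) - fst (a 2) * snd (a 1))"
      using e ab1 ab2 by (simp add: escl_def prod_eq_iff)
    then show False using d0 l0 by simp
  qed
  show ?thesis by (rule final_extract[OF l0 m0 ch(1) ch(2) det])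
qed



definition dil :: "'k::field \<Rightarrow> (int \<Rightarrow> 'k) \<Rightarrow> int \<Rightarrow> 'k" where
  "dil s x = (\<lambda>i. s powi i * x i)"

lemma dil_Ogen:
  fixes s l1 l2 :: "'k::field"
  assumes s0: "s \<noteq> 0" and rel: "l1 = s^2 * l2" and n: "1 \<le> n"
  shows "s powi i * Ogen l1 n i = s ^ n * Ogen l2 n i"
proof -
  have e: "l1 ^ n = s ^ n * s ^ n * l2 ^ n" using rel by (simp add: power_mult_distrib power2_eq_square)
  have sn: "s ^ n \<noteq> 0" using s0 by simp
  consider "i = int n" | "i = - int n" | "i \<noteq> int n" "i \<noteq> - int n" by blast
  then show ?thesis
  proof cases
    case 1 then show ?thesis using n by (simp add: Ogen_val)
  next
    case 2
    then have "i \<noteq> int n" using n by simp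
    then have "s powi i * Ogen l1 n i = - (inverse (s ^ n) * l1 ^ n)" using 2 n by (simp add: Ogen_val power_int_minus)
    also have "\<dots> = - (s ^ n * l2 ^ n)" using sn by (simp only: e) (simp add: mult.assoc[symmetric])
    also have "\<dots> = s ^ n * Ogen l2 n i" using 2 n \<open>i \<noteq> int n\<close> by (simp add: Ogen_val)
    finally show ?thesis .
  next
    case 3 then show ?thesis using n by (simp add: Ogen_val)
  qed
qed

lemma dil_Osub:
  fixes s l1 l2 :: "'k::field"
  assumes s0: "s \<noteq> 0" and rel: "l1 = s^2 * l2" and x: "x \<in> Osub l1"
  shows "dil s x \<in> Osub l2"
proof -
  obtain S c where S: "finite S" "S \<subseteq> {1..}" "x = (\<lambda>i. \<Sum>n\<in>S. c n * Ogen l1 n i)"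
    using x unfolding Osub_def by blast
  have "dil s x = (\<lambda>i. \<Sum>n\<in>S. (c n * s ^ n) * Ogen l2 n i)"
  proof
    fix i
    have "dil s x i = s powi i * (\<Sum>n\<in>S. c n * Ogen l1 n i)"
      by (simp only: dil_def S(3))
    also have "\<dots> = (\<Sum>n\<in>S. s powi i * (c n * Ogen l1 n i))"
      by (rule sum_distrib_left)
    also have "\<dots> = (\<Sum>n\<in>S. (c n * s ^ n) * Ogen l2 n i)"
    proof (rule sum.cong[OF refl])
      fix n assume "n \<in> S"
      then have n1: "1 \<le> n" using S(2) by auto
      have "s powi i * (c n * Ogen l1 n i) = c n * (s powi i * Ogen l1 n i)" by (simp only: mult.left_commute)
      also have "\<dots> = c n * (s ^ n * Ogen l2 n i)" by (simp only: dil_Ogen[OF s0 rel n1])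
      also have "\<dots> = (c n * s ^ n) * Ogen l2 n i" by (simp only: mult.assoc)
      finally show "s powi i * (c n * Ogen l1 n i) = (c n * s ^ n) * Ogen l2 n i" .
    qed
    finally show "dil s x i = (\<Sum>n\<in>S. (c n * s ^ n) * Ogen l2 n i)" .
  qed
  then show ?thesis unfolding Osub_def
    by (intro CollectI exI[of _ S] exI[of _ "\<lambda>n. c n * s ^ n"] conjI S(1) S(2))
qed

lemma dil_inv: "s \<noteq> 0 \<Longrightarrow> dil (inverse s) (dil s x) = x"
  by (auto simp: dil_def power_int_inverse)

lemma dil_bracket:
  assumes s0: "s \<noteq> 0"
  shows "dil s (wbracket x y) = wbracket (dil s x) (dil s y)"
proof
  fix p
  have supp: "{n. dil s x n \<noteq> 0} = {n. x n \<noteq> 0}" using s0 by (auto simp: dil_def power_int_not_zero)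
  have "wbracket (dil s x) (dil s y) p = (\<Sum>n\<in>{n. x n \<noteq> 0}. of_int (n - (p - n)) * (s powi n * x n) * (s powi (p - n) * y (p - n)))"
    unfolding wbracket_def supp by (simp add: dil_def)
  also have "\<dots> = (\<Sum>n\<in>{n. x n \<noteq> 0}. s powi p * (of_int (n - (p - n)) * x n * y (p - n)))"
  proof (rule sum.cong[OF refl])
    fix n
    have "s powi p = s powi n * s powi (p - n)" using s0 by (simp add: power_int_add[symmetric])
    then show "of_int (n - (p - n)) * (s powi n * x n) * (s powi (p - n) * y (p - n)) = s powi p * (of_int (n - (p - n)) * x n * y (p - n))"
      by (simp add: mult_ac)
  qed
  also have "\<dots> = dil s (wbracket x y) p"
    by (simp add: dil_def wbracket_def sum_distrib_left)
  finally show "dil s (wbracket x y) p = wbracket (dil s x) (dil s y) p" by simp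
qed

lemma easy_dir:
  fixes lam mu :: "'k::field_char_0"
  assumes l0: "lam \<noteq> 0" and m0: "mu \<noteq> 0" and r: "r ^ 2 = lam / mu"
  shows "lie_iso_sub (Osub lam) (Osub mu)"
proof -
  have r0: "r \<noteq> 0" using r l0 m0 by auto
  have rel1: "lam = r^2 * mu" using r m0 by (simp add: field_simps)
  have rel2: "mu = (inverse r)^2 * lam"
  proof -
    have "(inverse r)^2 * lam = (inverse r * r)^2 * mu" by (simp only: rel1 power_mult_distrib mult_ac)
    then show ?thesis using r0 by simp
  qed
  have bij: "bij_betw (dil r) (Osub lam) (Osub mu)"
  proof (rule bij_betw_byWitness[where f' = "dil (inverse r)"])
    show "\<forall>a\<in>Osub lam. dil (inverse r) (dil r a) = a" using r0 by (simp add: dil_inv)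
    show "\<forall>a'\<in>Osub mu. dil r (dil (inverse r) a') = a'" using r0 dil_inv[of "inverse r"] by simp
    show "dil r ` Osub lam \<subseteq> Osub mu" using dil_Osub[OF r0 rel1] by auto
    show "dil (inverse r) ` Osub mu \<subseteq> Osub lam" using dil_Osub[OF _ rel2] r0 by auto
  qed
  have lin: "\<forall>x\<in>Osub lam. \<forall>y\<in>Osub lam. \<forall>a b. dil r (wadd (wscale a x) (wscale b y)) = wadd (wscale a (dil r x)) (wscale b (dil r y))"
    by (simp add: dil_def wadd_def wscale_def algebra_simps)
  have br: "\<forall>x\<in>Osub lam. \<forall>y\<in>Osub lam. dil r (wbracket x y) = wbracket (dil r x) (dil r y)"
    using dil_bracket[OF r0] by simp
  show ?thesis unfolding lie_iso_sub_def by (intro exI[of _ "dil r"] conjI bij lin br)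
qed



lemma hard_dir:
  fixes lam mu :: "'k::field_char_0"
  assumes l0: "lam \<noteq> 0" and m0: "mu \<noteq> 0" and iso: "lie_iso_sub (Osub lam) (Osub mu)"
  shows "\<exists>r. r^2 = lam / mu"
proof -
  obtain phi where bij: "bij_betw phi (Osub lam) (Osub mu)"
    and lin: "\<forall>x\<in>Osub lam. \<forall>y\<in>Osub lam. \<forall>a b. phi (wadd (wscale a x) (wscale b y)) = wadd (wscale a (phi x)) (wscale b (phi y))"
    and br: "\<forall>x\<in>Osub lam. \<forall>y\<in>Osub lam. phi (wbracket x y) = wbracket (phi x) (phi y)"
    using iso unfolding lie_iso_sub_def by blast
  have lin2: "phi (\<lambda>i. a * x i + b * y i) = (\<lambda>i. a * phi x i + b * phi y i)"
    if "x \<in> Osub lam" "y \<in> Osub lam" for x y a b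
    using lin that unfolding wadd_def wscale_def by blast
  have o1: "Ogen lam 1 \<in> Osub lam" by (rule Ogen_in) simp
  have phi0: "phi (\<lambda>i. 0) = (\<lambda>i. 0)"
    using lin2[OF o1 o1, of 0 0] by simp
  have phisum: "phi (\<lambda>i. \<Sum>j\<in>J. d j * g j i) = (\<lambda>i. \<Sum>j\<in>J. d j * phi (g j) i)"
    if "finite J" "\<And>j. j \<in> J \<Longrightarrow> g j \<in> Osub lam" for J g d
    using that
  proof (induction J rule: finite_induct)
    case empty
    then show ?case using phi0 by simp
  next
    case (insert j J)
    have gj: "g j \<in> Osub lam" using insert.prems by simp
    have rest: "(\<lambda>i. \<Sum>j\<in>J. d j * g j i) \<in> Osub lam"
      using insert.prems by (intro Osub_sum[OF insert.hyps(1)] Osub_scale) auto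
    have "(\<lambda>i. \<Sum>j\<in>insert j J. d j * g j i) = (\<lambda>i. d j * g j i + 1 * (\<lambda>i. \<Sum>j\<in>J. d j * g j i) i)"
      using insert.hyps by simp
    then have "phi (\<lambda>i. \<Sum>j\<in>insert j J. d j * g j i) = (\<lambda>i. d j * phi (g j) i + 1 * phi (\<lambda>i. \<Sum>j\<in>J. d j * g j i) i)"
      using lin2[OF gj rest, of "d j" 1] by simp
    also have "\<dots> = (\<lambda>i. \<Sum>j\<in>insert j J. d j * phi (g j) i)"
      using insert by simp
    finally show ?case .
  qed
  have inj: "inj_on phi (Osub lam)" using bij by (rule bij_betw_imp_inj_on)
  have surj: "phi ` Osub lam = Osub mu" using bij by (rule bij_betw_imp_surj_on)
  define f where "f n = inv_into (Osub lam) phi (Ogen mu n)" for n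
  have im: "Ogen mu n \<in> phi ` Osub lam" if "1 \<le> n" for n
    using Ogen_in[OF that, of mu] surj by simp
  have fA: "f n \<in> Osub lam" if "1 \<le> n" for n
    unfolding f_def using im[OF that] by (rule inv_into_into)
  have phif: "phi (f n) = Ogen mu n" if "1 \<le> n" for n
    unfolding f_def using im[OF that] by (rule f_inv_into_f)
  define w where "w n = psi lam (f n)" for n
  have HW: "lbr lam (w n) (w m) = lscl (of_nat (n - m)) (w (n + m)) - lscl (of_nat (n + m) * mu ^ m) (w (n - m))"
    if nm: "1 \<le> m" "m < n" for n m
  proof -
    define comb where "comb = (\<lambda>i. of_nat (n - m) * f (n + m) i - of_nat (n + m) * mu ^ m * f (n - m) i)"
    have f1: "f (n + m) \<in> Osub lam" "f (n - m) \<in> Osub lam" "f n \<in> Osub lam" "f m \<in> Osub lam"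
      using nm by (auto intro!: fA)
    have combA: "comb \<in> Osub lam" unfolding comb_def by (rule Osub_diff) (use f1 in auto)
    have "phi comb = phi (\<lambda>i. of_nat (n - m) * f (n + m) i + (- (of_nat (n + m) * mu ^ m)) * f (n - m) i)"
      by (simp add: comb_def)
    also have "\<dots> = (\<lambda>i. of_nat (n - m) * phi (f (n + m)) i + (- (of_nat (n + m) * mu ^ m)) * phi (f (n - m)) i)"
      by (rule lin2[OF f1(1) f1(2)])
    also have "\<dots> = (\<lambda>i. of_nat (n - m) * Ogen mu (n + m) i - of_nat (n + m) * mu ^ m * Ogen mu (n - m) i)"
      using nm by (simp add: phif)
    also have "\<dots> = wbracket (Ogen mu n) (Ogen mu m)"
      by (rule wbr_Ogen_gt[OF nm, symmetric])
    also have "\<dots> = phi (wbracket (f n) (f m))"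
      using br f1 nm by (simp add: phif)
    finally have "phi comb = phi (wbracket (f n) (f m))" .
    then have eq: "wbracket (f n) (f m) = comb"
      using inj combA Osub_bracket[OF f1(3) f1(4)] by (auto dest: inj_onD)
    have "lbr lam (w n) (w m) = psi lam (wbracket (f n) (f m))"
      unfolding w_def by (rule psi_hom[symmetric]) (use f1 in auto)
    also have "\<dots> = psi lam comb" using eq by simp
    also have "\<dots> = lscl (of_nat (n - m)) (w (n + m)) - lscl (of_nat (n + m) * mu ^ m) (w (n - m))"
      unfolding comb_def w_def by (rule psi_diff) (use f1 in \<open>auto intro: Osub_carrier\<close>)
    finally show ?thesis .
  qed
  have HS: "\<exists>T d. finite T \<and> T \<subseteq> {1..} \<and> vv lam k = (\<Sum>m\<in>T. lscl (d m) (w m))"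
    if k: "1 \<le> k" for k
  proof -
    have ok: "Ogen lam k \<in> Osub lam" by (rule Ogen_in[OF k])
    then have "phi (Ogen lam k) \<in> Osub mu" using surj by auto
    then obtain T d where T: "finite T" "T \<subseteq> {1..}" "phi (Ogen lam k) = (\<lambda>i. \<Sum>m\<in>T. d m * Ogen mu m i)"
      unfolding Osub_def by blast
    define y where "y = (\<lambda>i. \<Sum>m\<in>T. d m * f m i)"
    have fT: "\<And>m. m \<in> T \<Longrightarrow> f m \<in> Osub lam" using T(2) by (auto intro!: fA)
    have yA: "y \<in> Osub lam" unfolding y_def using fT T(1) by (intro Osub_sum Osub_scale) auto
    have "phi y = (\<lambda>i. \<Sum>m\<in>T. d m * phi (f m) i)"
      unfolding y_def by (rule phisum[OF T(1) fT])
    also have "\<dots> = (\<lambda>i. \<Sum>m\<in>T. d m * Ogen mu m i)"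
    proof
      fix i show "(\<Sum>m\<in>T. d m * phi (f m) i) = (\<Sum>m\<in>T. d m * Ogen mu m i)"
        by (rule sum.cong[OF refl]) (use T(2) in \<open>auto simp: phif\<close>)
    qed
    finally have "phi y = phi (Ogen lam k)" using T(3) by simp
    then have yk: "y = Ogen lam k" using inj yA ok by (auto dest: inj_onD)
    have "vv lam k = psi lam y" using yk psi_Ogen[OF k, of lam] by simp
    also have "\<dots> = (\<Sum>m\<in>T. psi lam (\<lambda>i. d m * f m i))"
      unfolding y_def by (rule psi_sum[OF T(1)]) (use fT in \<open>auto intro: carrier_scale Osub_carrier\<close>)
    also have "\<dots> = (\<Sum>m\<in>T. lscl (d m) (w m))"
      by (rule sum.cong[OF refl]) (use fT in \<open>auto simp: w_def intro!: psi_scale Osub_carrier[of _ lam]\<close>)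
    finally show ?thesis using T(1,2) by blast
  qed
  obtain T1 d1 where T1: "finite T1" "T1 \<subseteq> {1..}" "vv lam 1 = (\<Sum>m\<in>T1. lscl (d1 m) (w m))"
    using HS[of 1] by auto
  obtain T2 d2 where T2: "finite T2" "T2 \<subseteq> {1..}" "vv lam 2 = (\<Sum>m\<in>T2. lscl (d2 m) (w m))"
    using HS[of 2] by auto
  show ?thesis by (rule core[OF l0 m0 HW T1 T2])
qed

theorem proposition4p22:
  fixes lam mu :: "'k::field_char_0"
  assumes "lam \<noteq> 0" and "mu \<noteq> 0"
  shows "lie_iso_sub (Osub lam) (Osub mu) \<longleftrightarrow> (\<exists>r::'k. r ^ 2 = lam / mu)"
  using hard_dir[OF assms] easy_dir[OF assms] by blast


end
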